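(* Let $\lambda\in(\frac16,\frac56)$ and $x\in[0,1]\setminus\mathcal E$. For every $n\ge0$, $I_n(x)$ is exactly the open interval of maximal length containing $x$ on which $F^\lambda_n$ is affine. In particular $$m_n(x)=\frac{F^\lambda_n(x)-F^\lambda_n(a_n(x))}{x-a_n(x)}$$ and $\mathrm{sgn}(m_n(x))=\mathrm{sgn}(\beta_{1,2}(x,n))\,\varepsilon_n(x)$.
   Context: Construction: $F^\lambda_0\equiv0$ on $[0,1]$ (one interval of generation $0$). Given $F^\lambda_n$ with its $4^n$ closed intervals of generation $n$ (covering $[0,1]$, disjoint interiors, $F^\lambda_n$ affine on each), on each interval $[a,b]$ of generation $n$, with $\ell=b-a$ and slope $m$, $F^\lambda_{n+1}$ coincides with $F^\lambda_n$ at $a,a+\ell/3,a+2\ell/3,b$, equals $F^\lambda_n(a+\ell/2)+\lambda\ell\sqrt{1+m^2}$ at $a+\ell/2$, and is affine on $[a,a+\ell/3],[a+\ell/3,a+\ell/2],[a+\ell/2,a+2\ell/3],[a+2\ell/3,b]$ (generation $n+1$). Dynamics: $T(x)=3x$ on $[0,\frac13)$, $6x-2$ on $[\frac13,\frac12)$, $4-6x$ on $[\frac12,\frac23)$, $3x-2$ on $[\frac23,1]$; $U(x)=0,1,2,3$ and $\widetilde U(x)=0,\frac13,\frac23,\frac23$ on these intervals respectively; $u_n(x)=U(T^nx)$, $\widetilde u_n(x)=\widetilde U(T^nx)$; $\beta_i(x,n)=\#\{k<n:u_k(x)=i\}$, $\beta_{i,j}=\beta_i+\beta_j$; $\varepsilon_n(x)=(-1)^{\beta_2(x,n)}$,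 $\ell_n(x)=3^{-\beta_{0,3}(x,n)}6^{-\beta_{1,2}(x,n)}$, $a_0(x)=0$, $a_n(x)=\sum_{k=0}^{n-1}\widetilde u_k(x)\varepsilon_k(x)\ell_k(x)$; $I_n(x)$ is the open interval with endpoints $a_n(x)$ and $a_n(x)+\varepsilon_n(x)\ell_n(x)$. $\mathcal E$ is the set of $x$ whose digit sequence $(u_n(x))$ is eventually constantly $0$ or eventually constantly $3$; for $x\notin\mathcal E$, $F^\lambda_n$ is differentiable at $x$ and $m_n(x)$ denotes its slope at $x$. $\mathrm{sgn}$ is the sign function ($\mathrm{sgn}(0)=0$). *)

theory Defs
  imports "HOL-Analysis.Analysis"
begin

text \<open>Closed intervals of generation n, represented as pairs (a,b) (they do not depend on lambda).\<close>
fun gen :: "nat \<Rightarrow> (real \<times> real) set" where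
  "gen 0 = {(0, 1)}"
| "gen (Suc n) = (\<Union>(a, b) \<in> gen n.
      {(a, a + (b - a) / 3), (a + (b - a) / 3, a + (b - a) / 2),
       (a + (b - a) / 2, a + 2 * (b - a) / 3), (a + 2 * (b - a) / 3, b)})"

definition hat :: "real \<Rightarrow> real \<Rightarrow> real \<Rightarrow> real" where
  "hat a b x = max 0 (1 - \<bar>x - (a + (b - a) / 2)\<bar> / ((b - a) / 6))"

text \<open>F^lambda_{n+1} = F^lambda_n plus, on each generation-n interval [a,b] with slope m,
  the bump of height lambda*l*sqrt(1+m^2) at a+l/2; this is exactly the piecewise affine
  function that coincides with F^lambda_n at a, a+l/3, a+2l/3, b and is raised by
  lambda*l*sqrt(1+m^2) at a+l/2.  The slope m of the affine function F^lambda_n on [a,b]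
  is (F^lambda_n b - F^lambda_n a)/(b-a).\<close>
fun Flam :: "real \<Rightarrow> nat \<Rightarrow> real \<Rightarrow> real" where
  "Flam lam 0 = (\<lambda>x. 0)"
| "Flam lam (Suc n) = (\<lambda>x. Flam lam n x +
      (\<Sum>(a, b) \<in> gen n.
         lam * (b - a) * sqrt (1 + ((Flam lam n b - Flam lam n a) / (b - a))\<^sup>2) * hat a b x))"

definition T :: "real \<Rightarrow> real" where
  "T x = (if x < 1/3 then 3 * x else if x < 1/2 then 6 * x - 2
          else if x < 2/3 then 4 - 6 * x else 3 * x - 2)"

definition U :: "real \<Rightarrow> nat" where
  "U x = (if x < 1/3 then 0 else if x < 1/2 then 1 else if x < 2/3 then 2 else 3)"

definition Ut :: "real \<Rightarrow> real" where
  "Ut x = (if x < 1/3 then 0 else if x < 1/2 then 1/3 else if x < 2/3 then 2/3 else 2/3)"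

definition u :: "nat \<Rightarrow> real \<Rightarrow> nat" where
  "u n x = U ((T ^^ n) x)"

definition ut :: "nat \<Rightarrow> real \<Rightarrow> real" where
  "ut n x = Ut ((T ^^ n) x)"

definition beta :: "nat \<Rightarrow> real \<Rightarrow> nat \<Rightarrow> nat" where
  "beta i x n = card {k. k < n \<and> u k x = i}"

definition beta2 :: "nat \<Rightarrow> nat \<Rightarrow> real \<Rightarrow> nat \<Rightarrow> nat" where
  "beta2 i j x n = beta i x n + beta j x n"

definition eps :: "nat \<Rightarrow> real \<Rightarrow> real" where
  "eps n x = (-1) ^ beta 2 x n"

definition ell :: "nat \<Rightarrow> real \<Rightarrow> real" where
  "ell n x = 1 / (3 ^ beta2 0 3 x n * 6 ^ beta2 1 2 x n)"

definition an :: "nat \<Rightarrow> real \<Rightarrow> real" where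
  "an n x = (\<Sum>k<n. ut k x * eps k x * ell k x)"

definition In :: "nat \<Rightarrow> real \<Rightarrow> real set" where
  "In n x = {min (an n x) (an n x + eps n x * ell n x) <..< max (an n x) (an n x + eps n x * ell n x)}"

definition E :: "real set" where
  "E = {x. \<exists>N. (\<forall>k\<ge>N. u k x = 0) \<or> (\<forall>k\<ge>N. u k x = 3)}"

definition affine_on :: "(real \<Rightarrow> real) \<Rightarrow> real set \<Rightarrow> bool" where
  "affine_on f J \<longleftrightarrow> (\<exists>c d. \<forall>y\<in>J. f y = c * y + d)"

end

theory Submission
  imports Defs
begin

lemma finite_gen: "finite (gen n)"
  by (induct n) auto

lemma gen_Suc_iff: "p \<in> gen (Suc n) \<longleftrightarrow> (\<exists>a b. (a,b) \<in> gen n \<and>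
   (p = (a, a + (b - a) / 3) \<or> p = (a + (b - a) / 3, a + (b - a) / 2) \<or>
    p = (a + (b - a) / 2, a + 2 * (b - a) / 3) \<or> p = (a + 2 * (b - a) / 3, b)))"
  by auto

lemma gen_SucI:
  assumes "(a,b) \<in> gen n"
  shows "(a, a + (b - a) / 3) \<in> gen (Suc n)" "(a + (b - a) / 3, a + (b - a) / 2) \<in> gen (Suc n)"
    "(a + (b - a) / 2, a + 2 * (b - a) / 3) \<in> gen (Suc n)" "(a + 2 * (b - a) / 3, b) \<in> gen (Suc n)"
  using assms by (auto simp only: gen_Suc_iff)

lemma gen_props: "(a,b) \<in> gen n \<Longrightarrow> 0 \<le> a \<and> a < b \<and> b \<le> 1"
proof (induct n arbitrary: a b)
  case 0 then show ?case by auto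
next
  case (Suc n)
  then obtain a0 b0 where p: "(a0,b0) \<in> gen n" and
    c: "(a,b) = (a0, a0 + (b0 - a0) / 3) \<or> (a,b) = (a0 + (b0 - a0) / 3, a0 + (b0 - a0) / 2) \<or>
    (a,b) = (a0 + (b0 - a0) / 2, a0 + 2 * (b0 - a0) / 3) \<or> (a,b) = (a0 + 2 * (b0 - a0) / 3, b0)"
    unfolding gen_Suc_iff by blast
  from Suc.hyps[OF p] c show ?case by (auto simp: field_simps)
qed

lemma gen_disj: "(a,b) \<in> gen n \<Longrightarrow> (a',b') \<in> gen n \<Longrightarrow> (a,b) \<noteq> (a',b') \<Longrightarrow> b \<le> a' \<or> b' \<le> a"
proof (induct n arbitrary: a b a' b')
  case 0 then show ?case by auto
next
  case (Suc n)
  from Suc.prems(1) obtain a0 b0 where p: "(a0,b0) \<in> gen n" and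
    c: "(a,b) = (a0, a0 + (b0 - a0) / 3) \<or> (a,b) = (a0 + (b0 - a0) / 3, a0 + (b0 - a0) / 2) \<or>
    (a,b) = (a0 + (b0 - a0) / 2, a0 + 2 * (b0 - a0) / 3) \<or> (a,b) = (a0 + 2 * (b0 - a0) / 3, b0)"
    unfolding gen_Suc_iff by blast
  from Suc.prems(2) obtain a1 b1 where p1: "(a1,b1) \<in> gen n" and
    c1: "(a',b') = (a1, a1 + (b1 - a1) / 3) \<or> (a',b') = (a1 + (b1 - a1) / 3, a1 + (b1 - a1) / 2) \<or>
    (a',b') = (a1 + (b1 - a1) / 2, a1 + 2 * (b1 - a1) / 3) \<or> (a',b') = (a1 + 2 * (b1 - a1) / 3, b1)"
    unfolding gen_Suc_iff by blast
  have l0: "a0 < b0" using gen_props[OF p] by auto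
  have l1: "a1 < b1" using gen_props[OF p1] by auto
  have s0: "a0 \<le> a" "b \<le> b0" using c l0 by (auto simp: field_simps)
  have s1: "a1 \<le> a'" "b' \<le> b1" using c1 l1 by (auto simp: field_simps)
  show ?case
  proof (cases "(a0,b0) = (a1,b1)")
    case True
    then have "a0 = a1" "b0 = b1" by auto
    then show ?thesis using c c1 l0 Suc.prems(3) by auto
  next
    case False
    from Suc.hyps[OF p p1 False] s0 s1 show ?thesis by auto
  qed
qed

lemma hat_zero: "a < b \<Longrightarrow> y \<le> a + (b - a) / 3 \<or> a + 2 * (b - a) / 3 \<le> y \<Longrightarrow> hat a b y = 0"
  unfolding hat_def by (auto simp: field_simps abs_if max_def)

lemma hat_left: assumes "a < b" "a + (b - a) / 3 \<le> y" "y \<le> a + (b - a) / 2" shows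
   "hat a b y = 6 * (y - a) / (b - a) - 2"
proof -
  have e: "\<bar>y - (a + (b - a) / 2)\<bar> = (a + (b - a) / 2) - y" using assms by simp
  have "1 - ((a + (b - a) / 2) - y) / ((b - a) / 6) = 6 * (y - a) / (b - a) - 2"
    using assms by (simp add: field_simps)
  moreover have "0 \<le> 6 * (y - a) / (b - a) - 2" using assms by (simp add: field_simps)
  ultimately show ?thesis unfolding hat_def e by simp
qed

lemma hat_right: assumes "a < b" "a + (b - a) / 2 \<le> y" "y \<le> a + 2 * (b - a) / 3" shows
   "hat a b y = 4 - 6 * (y - a) / (b - a)"
proof -
  have e: "\<bar>y - (a + (b - a) / 2)\<bar> = y - (a + (b - a) / 2)" using assms by simp
  have "1 - (y - (a + (b - a) / 2)) / ((b - a) / 6) = 4 - 6 * (y - a) / (b - a)"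
    using assms by (simp add: field_simps)
  moreover have "0 \<le> 4 - 6 * (y - a) / (b - a)" using assms by (simp add: field_simps)
  ultimately show ?thesis unfolding hat_def e by simp
qed

definition sl :: "real \<Rightarrow> nat \<Rightarrow> real \<Rightarrow> real \<Rightarrow> real" where
  "sl lam n a b = (Flam lam n b - Flam lam n a) / (b - a)"

lemma Flam_Suc_on:
  assumes ab: "(a,b) \<in> gen n" and y: "y \<in> {a..b}"
  shows "Flam lam (Suc n) y = Flam lam n y + lam * (b - a) * sqrt (1 + (sl lam n a b)\<^sup>2) * hat a b y"
proof -
  let ?f = "\<lambda>(a, b). lam * (b - a) * sqrt (1 + ((Flam lam n b - Flam lam n a) / (b - a))\<^sup>2) * hat a b y"
  have "sum ?f (gen n) = ?f (a,b) + sum ?f (gen n - {(a,b)})"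
    using sum.remove[OF finite_gen ab] by blast
  also have "sum ?f (gen n - {(a,b)}) = 0"
  proof (rule sum.neutral, rule ballI)
    fix p assume "p \<in> gen n - {(a,b)}"
    then obtain a' b' where pe: "p = (a',b')" and m: "(a',b') \<in> gen n" "(a', b') \<noteq> (a,b)"
      by (cases p) auto
    have "a' < b'" "a < b" using gen_props[OF m(1)] gen_props[OF ab] by auto
    moreover have "b \<le> a' \<or> b' \<le> a" using gen_disj[OF ab m(1)] m(2) by auto
    ultimately have "hat a' b' y = 0" using y by (intro hat_zero) (auto simp: field_simps)
    then show "?f p = 0" by (simp add: pe)
  qed
  finally show ?thesis by (simp add: sl_def)
qed

declare Flam.simps(2)[simp del]

lemma slope_from_lin: fixes f :: "real \<Rightarrow> real" assumes "a < b" "\<forall>y\<in>{a..b}. f y = f a + k * (y - a)" shows "(f b - f a) / (b - a) = k"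
proof -
  have "b \<in> {a..b}" using assms(1) by auto
  then have "f b = f a + k * (b - a)" using assms(2) by blast
  then show ?thesis using assms(1) by (simp add: field_simps)
qed

lemma child_lin:
  fixes lam :: real
  assumes ab: "(a,b) \<in> gen n"
    and aff: "\<forall>y\<in>{a..b}. Flam lam n y = Flam lam n a + sl lam n a b * (y - a)"
  defines "m \<equiv> sl lam n a b"
  defines "s \<equiv> 6 * lam * sqrt (1 + m\<^sup>2)"
  shows "\<forall>y\<in>{a..a + (b - a) / 3}. Flam lam (Suc n) y = Flam lam (Suc n) a + m * (y - a)"
    and "\<forall>y\<in>{a + (b - a) / 3..a + (b - a) / 2}. Flam lam (Suc n) y =
           Flam lam (Suc n) (a + (b - a) / 3) + (m + s) * (y - (a + (b - a) / 3))"
    and "\<forall>y\<in>{a + (b - a) / 2..a + 2 * (b - a) / 3}. Flam lam (Suc n) y =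
           Flam lam (Suc n) (a + (b - a) / 2) + (m - s) * (y - (a + (b - a) / 2))"
    and "\<forall>y\<in>{a + 2 * (b - a) / 3..b}. Flam lam (Suc n) y =
           Flam lam (Suc n) (a + 2 * (b - a) / 3) + m * (y - (a + 2 * (b - a) / 3))"
proof -
  have lt: "a < b" using gen_props[OF ab] by auto
  define H where "H = lam * (b - a) * sqrt (1 + m\<^sup>2)"
  have G: "Flam lam (Suc n) y = Flam lam n a + m * (y - a) + H * hat a b y" if "y \<in> {a..b}" for y
  proof -
    have "Flam lam n y = Flam lam n a + m * (y - a)" using aff that unfolding m_def by blast
    then show ?thesis using Flam_Suc_on[OF ab that, of lam] unfolding H_def m_def by simp
  qed
  have iv: "a + (b - a) / 3 \<in> {a..b}" "a + (b - a) / 2 \<in> {a..b}" "a + 2 * (b - a) / 3 \<in> {a..b}"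
    "a \<in> {a..b}" "b \<in> {a..b}" using lt by (simp_all add: field_simps)
  have h1a: "hat a b (a + (b - a) / 3) = 0" by (rule hat_zero[OF lt], rule disjI1, simp)
  have h1b: "hat a b (a + 2 * (b - a) / 3) = 0" by (rule hat_zero[OF lt], rule disjI2, simp)
  have h1c: "hat a b a = 0" by (rule hat_zero[OF lt], rule disjI1, use lt in simp)
  have h1d: "hat a b b = 0" by (rule hat_zero[OF lt], rule disjI2, use lt in \<open>simp add: field_simps\<close>)
  note h1 = h1a h1b h1c h1d
  have h2: "hat a b (a + (b - a) / 2) = 1" using hat_left[OF lt, of "a + (b - a) / 2"] lt
    by (simp add: field_simps)
  have Hs: "H * (6 * (y - a) / (b - a) - 2) = s * (y - (a + (b - a) / 3))" for y
    using lt unfolding H_def s_def by (simp add: field_simps)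
  have Hs2: "H * (4 - 6 * (y - a) / (b - a)) - H = (- s) * (y - (a + (b - a) / 2))" for y
    using lt unfolding H_def s_def by (simp add: field_simps)
  show "\<forall>y\<in>{a..a + (b - a) / 3}. Flam lam (Suc n) y = Flam lam (Suc n) (a) + m * (y - a)"
  proof
    fix y assume y: "y \<in> {a..a + (b - a) / 3}"
    then have yi: "y \<in> {a..b}" using lt by (auto simp: field_simps)
    have hy: "hat a b y = 0" using y lt by (intro hat_zero) auto
    have e1: "Flam lam (Suc n) y = Flam lam n a + m * (y - a) + H * hat a b y" by (rule G[OF yi])
    have e2: "Flam lam (Suc n) (a) = Flam lam n a + m * ((a) - a) + H * hat a b (a)" by (rule G[OF iv(4)])
    have e3: "H * hat a b y = 0" using hy by simp
    show "Flam lam (Suc n) y = Flam lam (Suc n) (a) + m * (y - a)"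
      unfolding e1 e2 e3 h1c by (simp add: field_simps)
  qed
  show "\<forall>y\<in>{a + (b - a) / 3..a + (b - a) / 2}. Flam lam (Suc n) y = Flam lam (Suc n) (a + (b - a) / 3) + (m + s) * (y - (a + (b - a) / 3))"
  proof
    fix y assume y: "y \<in> {a + (b - a) / 3..a + (b - a) / 2}"
    then have yi: "y \<in> {a..b}" using lt by (auto simp: field_simps)
    have hy: "hat a b y = 6 * (y - a) / (b - a) - 2" using y lt by (intro hat_left) auto
    have e1: "Flam lam (Suc n) y = Flam lam n a + m * (y - a) + H * hat a b y" by (rule G[OF yi])
    have e2: "Flam lam (Suc n) (a + (b - a) / 3) = Flam lam n a + m * ((a + (b - a) / 3) - a) + H * hat a b (a + (b - a) / 3)" by (rule G[OF iv(1)])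
    have e3: "H * hat a b y = s * (y - (a + (b - a) / 3))" using hy Hs[of y] by simp
    show "Flam lam (Suc n) y = Flam lam (Suc n) (a + (b - a) / 3) + (m + s) * (y - (a + (b - a) / 3))"
      unfolding e1 e2 e3 h1a by (simp add: field_simps)
  qed
  show "\<forall>y\<in>{a + (b - a) / 2..a + 2 * (b - a) / 3}. Flam lam (Suc n) y = Flam lam (Suc n) (a + (b - a) / 2) + (m - s) * (y - (a + (b - a) / 2))"
  proof
    fix y assume y: "y \<in> {a + (b - a) / 2..a + 2 * (b - a) / 3}"
    then have yi: "y \<in> {a..b}" using lt by (auto simp: field_simps)
    have hy: "hat a b y = 4 - 6 * (y - a) / (b - a)" using y lt by (intro hat_right) auto
    have e1: "Flam lam (Suc n) y = Flam lam n a + m * (y - a) + H * hat a b y" by (rule G[OF yi])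
    have e2: "Flam lam (Suc n) (a + (b - a) / 2) = Flam lam n a + m * ((a + (b - a) / 2) - a) + H * hat a b (a + (b - a) / 2)" by (rule G[OF iv(2)])
    have e3: "H * hat a b y = H - s * (y - (a + (b - a) / 2))" using hy Hs2[of y] by simp
    show "Flam lam (Suc n) y = Flam lam (Suc n) (a + (b - a) / 2) + (m - s) * (y - (a + (b - a) / 2))"
      unfolding e1 e2 e3 h2 by (simp add: field_simps)
  qed
  show "\<forall>y\<in>{a + 2 * (b - a) / 3..b}. Flam lam (Suc n) y = Flam lam (Suc n) (a + 2 * (b - a) / 3) + m * (y - (a + 2 * (b - a) / 3))"
  proof
    fix y assume y: "y \<in> {a + 2 * (b - a) / 3..b}"
    then have yi: "y \<in> {a..b}" using lt by (auto simp: field_simps)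
    have hy: "hat a b y = 0" using y lt by (intro hat_zero) auto
    have e1: "Flam lam (Suc n) y = Flam lam n a + m * (y - a) + H * hat a b y" by (rule G[OF yi])
    have e2: "Flam lam (Suc n) (a + 2 * (b - a) / 3) = Flam lam n a + m * ((a + 2 * (b - a) / 3) - a) + H * hat a b (a + 2 * (b - a) / 3)" by (rule G[OF iv(3)])
    have e3: "H * hat a b y = 0" using hy by simp
    show "Flam lam (Suc n) y = Flam lam (Suc n) (a + 2 * (b - a) / 3) + m * (y - (a + 2 * (b - a) / 3))"
      unfolding e1 e2 e3 h1b by (simp add: field_simps)
  qed
qed

lemma gen_affine: "(a,b) \<in> gen n \<Longrightarrow> \<forall>y\<in>{a..b}. Flam lam n y = Flam lam n a + sl lam n a b * (y - a)"
proof (induct n arbitrary: a b)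
  case 0 then show ?case by (simp add: sl_def)
next
  case (Suc n)
  from Suc.prems obtain a0 b0 where p: "(a0,b0) \<in> gen n" and
    c: "(a,b) = (a0, a0 + (b0 - a0) / 3) \<or> (a,b) = (a0 + (b0 - a0) / 3, a0 + (b0 - a0) / 2) \<or>
    (a,b) = (a0 + (b0 - a0) / 2, a0 + 2 * (b0 - a0) / 3) \<or> (a,b) = (a0 + 2 * (b0 - a0) / 3, b0)"
    unfolding gen_Suc_iff by blast
  have lt: "a < b" using gen_props[OF Suc.prems] by auto
  note cl = child_lin[OF p Suc.hyps[OF p]]
  have "\<exists>k. \<forall>y\<in>{a..b}. Flam lam (Suc n) y = Flam lam (Suc n) a + k * (y - a)"
  proof -
    consider "a = a0" "b = a0 + (b0 - a0) / 3" | "a = a0 + (b0 - a0) / 3" "b = a0 + (b0 - a0) / 2"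
      | "a = a0 + (b0 - a0) / 2" "b = a0 + 2 * (b0 - a0) / 3" | "a = a0 + 2 * (b0 - a0) / 3" "b = b0"
      using c by auto
    then show ?thesis
    proof cases
      case 1 show ?thesis unfolding 1 by (rule exI[where x="sl lam n a0 b0"], rule cl(1))
    next
      case 2 show ?thesis unfolding 2 by (rule exI[where x="sl lam n a0 b0 + 6 * lam * sqrt (1 + (sl lam n a0 b0)\<^sup>2)"], rule cl(2))
    next
      case 3 show ?thesis unfolding 3 by (rule exI[where x="sl lam n a0 b0 - 6 * lam * sqrt (1 + (sl lam n a0 b0)\<^sup>2)"], rule cl(3))
    next
      case 4 show ?thesis unfolding 4 by (rule exI[where x="sl lam n a0 b0"], rule cl(4))
    qed
  qed
  then obtain k where k: "\<forall>y\<in>{a..b}. Flam lam (Suc n) y = Flam lam (Suc n) a + k * (y - a)" by blast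
  have e: "sl lam (Suc n) a b = k" unfolding sl_def using slope_from_lin[OF lt k] .
  show ?case unfolding e by (rule k)
qed

lemma child_slopes:
  fixes lam :: real
  assumes ab: "(a,b) \<in> gen n"
  shows "sl lam (Suc n) a (a + (b - a) / 3) = sl lam n a b"
    and "sl lam (Suc n) (a + (b - a) / 3) (a + (b - a) / 2) = sl lam n a b + 6 * lam * sqrt (1 + (sl lam n a b)\<^sup>2)"
    and "sl lam (Suc n) (a + (b - a) / 2) (a + 2 * (b - a) / 3) = sl lam n a b - 6 * lam * sqrt (1 + (sl lam n a b)\<^sup>2)"
    and "sl lam (Suc n) (a + 2 * (b - a) / 3) b = sl lam n a b"
proof -
  have lt: "a < b" using gen_props[OF ab] by auto
  note cl = child_lin[OF ab gen_affine[OF ab], of lam]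
  show "sl lam (Suc n) a (a + (b - a) / 3) = sl lam n a b" unfolding sl_def
    by (rule slope_from_lin[OF _ cl(1)[unfolded sl_def]]) (use lt in \<open>auto simp: field_simps\<close>)
  show "sl lam (Suc n) (a + (b - a) / 3) (a + (b - a) / 2) = sl lam n a b + 6 * lam * sqrt (1 + (sl lam n a b)\<^sup>2)" unfolding sl_def
    by (rule slope_from_lin[OF _ cl(2)[unfolded sl_def]]) (use lt in \<open>auto simp: field_simps\<close>)
  show "sl lam (Suc n) (a + (b - a) / 2) (a + 2 * (b - a) / 3) = sl lam n a b - 6 * lam * sqrt (1 + (sl lam n a b)\<^sup>2)" unfolding sl_def
    by (rule slope_from_lin[OF _ cl(3)[unfolded sl_def]]) (use lt in \<open>auto simp: field_simps\<close>)
  show "sl lam (Suc n) (a + 2 * (b - a) / 3) b = sl lam n a b" unfolding sl_def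
    by (rule slope_from_lin[OF _ cl(4)[unfolded sl_def]]) (use lt in \<open>auto simp: field_simps\<close>)
qed


definition kink :: "real \<Rightarrow> nat \<Rightarrow> real \<Rightarrow> bool" where
  "kink lam n p \<longleftrightarrow> (\<exists>a1 b2. (a1,p) \<in> gen n \<and> (p,b2) \<in> gen n \<and> sl lam n a1 p \<noteq> sl lam n p b2)"

lemma kink_Suc: assumes "kink lam n p" shows "kink lam (Suc n) p"
proof -
  obtain a1 b2 where h: "(a1,p) \<in> gen n" "(p,b2) \<in> gen n" "sl lam n a1 p \<noteq> sl lam n p b2"
    using assms unfolding kink_def by blast
  show ?thesis unfolding kink_def
    apply (rule exI[where x="a1 + 2 * (p - a1) / 3"], rule exI[where x="p + (b2 - p) / 3"])
    using gen_SucI(4)[OF h(1)] gen_SucI(1)[OF h(2)] child_slopes(4)[OF h(1), of lam]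
      child_slopes(1)[OF h(2), of lam] h(3) by simp
qed

lemma kink_new:
  fixes lam :: real
  assumes "0 < lam" and ab: "(a,b) \<in> gen n"
  shows "kink lam (Suc n) (a + (b - a) / 3)" "kink lam (Suc n) (a + (b - a) / 2)"
    "kink lam (Suc n) (a + 2 * (b - a) / 3)"
proof -
  have "0 < 6 * lam * sqrt (1 + (sl lam n a b)\<^sup>2)" using assms(1)
    by (intro mult_pos_pos) (auto intro: add_pos_nonneg)
  note sp = this
  have nz: "1 + (sl lam n a b)\<^sup>2 \<noteq> 0" "lam \<noteq> 0" using assms(1) by (smt (verit) zero_le_power2)+
  note g = gen_SucI[OF ab] and cs = child_slopes[OF ab, of lam]
  show "kink lam (Suc n) (a + (b - a) / 3)" unfolding kink_def
    apply (rule exI[where x="a"], rule exI[where x="a + (b - a) / 2"])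
    using g cs sp nz by simp
  show "kink lam (Suc n) (a + (b - a) / 2)" unfolding kink_def
    apply (rule exI[where x="a + (b - a) / 3"], rule exI[where x="a + 2 * (b - a) / 3"])
    using g cs sp nz by simp
  show "kink lam (Suc n) (a + 2 * (b - a) / 3)" unfolding kink_def
    apply (rule exI[where x="a + (b - a) / 2"], rule exI[where x="b"])
    using g cs sp nz by simp
qed

lemma gen_kink: "0 < lam \<Longrightarrow> (a,b) \<in> gen n \<Longrightarrow> (0 < a \<longrightarrow> kink lam n a) \<and> (b < 1 \<longrightarrow> kink lam n b)"
proof (induct n arbitrary: a b)
  case 0 then show ?case by auto
next
  case (Suc n)
  from Suc.prems(2) obtain a0 b0 where p: "(a0,b0) \<in> gen n" and
    c: "(a,b) = (a0, a0 + (b0 - a0) / 3) \<or> (a,b) = (a0 + (b0 - a0) / 3, a0 + (b0 - a0) / 2) \<or>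
    (a,b) = (a0 + (b0 - a0) / 2, a0 + 2 * (b0 - a0) / 3) \<or> (a,b) = (a0 + 2 * (b0 - a0) / 3, b0)"
    unfolding gen_Suc_iff by blast
  note ih = Suc.hyps[OF Suc.prems(1) p]
  note kn = kink_new[OF Suc.prems(1) p]
  consider "a = a0" "b = a0 + (b0 - a0) / 3" | "a = a0 + (b0 - a0) / 3" "b = a0 + (b0 - a0) / 2"
      | "a = a0 + (b0 - a0) / 2" "b = a0 + 2 * (b0 - a0) / 3" | "a = a0 + 2 * (b0 - a0) / 3" "b = b0"
    using c by auto
  then show ?case
  proof cases
    case 1 then show ?thesis using ih kn kink_Suc by auto
  next
    case 2 then show ?thesis using kn by auto
  next
    case 3 then show ?thesis using kn by auto
  next
    case 4 then show ?thesis using ih kn kink_Suc by auto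
  qed
qed

lemma kink_contra:
  fixes C D :: real
  assumes k: "kink lam n p" and cp: "c < p" and pd: "p < d"
    and aff: "\<forall>y\<in>{c<..<d}. Flam lam n y = C * y + D"
  shows False
proof -
  obtain a1 b2 where h: "(a1,p) \<in> gen n" "(p,b2) \<in> gen n" "sl lam n a1 p \<noteq> sl lam n p b2"
    using k unfolding kink_def by blast
  have lt: "a1 < p" "p < b2" using gen_props[OF h(1)] gen_props[OF h(2)] by auto
  note A1 = gen_affine[OF h(1), of lam] and A2 = gen_affine[OF h(2), of lam]
  define y1 where "y1 = (max c a1 + p) / 2"
  define y2 where "y2 = (p + min d b2) / 2"
  have y1: "c < y1" "y1 < p" "a1 \<le> y1" using lt cp unfolding y1_def by auto
  have y2: "y2 < d" "p < y2" "y2 \<le> b2" using lt pd unfolding y2_def by auto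
  have f1: "Flam lam n y1 = Flam lam n a1 + sl lam n a1 p * (y1 - a1)" using bspec[OF A1, of y1] y1 lt by auto
  have f2: "Flam lam n p = Flam lam n a1 + sl lam n a1 p * (p - a1)" using bspec[OF A1, of p] lt by auto
  have f3: "Flam lam n y2 = Flam lam n p + sl lam n p b2 * (y2 - p)" using bspec[OF A2, of y2] y2 lt by auto
  have g1: "Flam lam n y1 = C * y1 + D" using bspec[OF aff, of y1] bspec[OF aff, of y2] y1 y2 cp pd by auto
  have g2: "Flam lam n p = C * p + D" using bspec[OF aff, of p] cp pd by auto
  have g3: "Flam lam n y2 = C * y2 + D" using bspec[OF aff, of y1] bspec[OF aff, of y2] y1 y2 cp pd by auto
  have "(C - sl lam n a1 p) * (p - y1) = 0" using f1 f2 g1 g2 by (simp add: algebra_simps)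
  then have e1: "C = sl lam n a1 p" using y1 by simp
  have "(C - sl lam n p b2) * (y2 - p) = 0" using f3 g2 g3 by (simp add: algebra_simps)
  then have e2: "C = sl lam n p b2" using y2 by simp
  show False using e1 e2 h(3) by simp
qed


lemma beta_Suc: "beta i x (Suc n) = beta i x n + (if u n x = i then 1 else 0)"
proof -
  have "{k. k < Suc n \<and> u k x = i} = (if u n x = i then insert n {k. k < n \<and> u k x = i} else {k. k < n \<and> u k x = i})"
    by (auto simp: less_Suc_eq)
  then show ?thesis unfolding beta_def by simp
qed

lemma u_cases: "u n x = 0 \<or> u n x = 1 \<or> u n x = 2 \<or> u n x = 3"
  by (simp add: u_def U_def)

lemma an_Suc: "an (Suc n) x = an n x + ut n x * eps n x * ell n x"
  by (simp add: an_def)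

lemma eps_Suc: "eps (Suc n) x = (if u n x = 2 then - eps n x else eps n x)"
  by (simp add: eps_def beta_Suc)

lemma ell_Suc: "ell (Suc n) x = ell n x / (if u n x = 1 \<or> u n x = 2 then 6 else 3)"
  using u_cases[of n x] by (auto simp: ell_def beta2_def beta_Suc)

lemma b12_Suc: "beta2 1 2 x (Suc n) = beta2 1 2 x n + (if u n x = 1 \<or> u n x = 2 then 1 else 0)"
  using u_cases[of n x] by (auto simp: beta2_def beta_Suc)

lemma ell_pos: "0 < ell n x"
  by (simp add: ell_def)

lemma eps_pm: "eps n x = 1 \<or> eps n x = -1"
  by (cases "even (beta 2 x n)") (simp_all add: eps_def)

lemma T_range: "y \<in> {0..1} \<Longrightarrow> T y \<in> {0..1}"
  by (auto simp: T_def)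

definition lo :: "nat \<Rightarrow> real \<Rightarrow> real" where
  "lo n x = (if eps n x = 1 then an n x else an n x - ell n x)"
definition hi :: "nat \<Rightarrow> real \<Rightarrow> real" where
  "hi n x = (if eps n x = 1 then an n x + ell n x else an n x)"

lemma In_eq: "In n x = {lo n x<..<hi n x}"
  using ell_pos[of n x] eps_pm[of n x] by (auto simp: In_def lo_def hi_def)

lemma sl_sign:
  fixes lam m :: real
  assumes "1/6 < lam"
  shows "0 < m + 6 * lam * sqrt (1 + m\<^sup>2)" "m - 6 * lam * sqrt (1 + m\<^sup>2) < 0"
proof -
  have "\<bar>m\<bar> < sqrt (1 + m\<^sup>2)"
    using real_sqrt_less_mono[of "m\<^sup>2" "1 + m\<^sup>2"] by simp
  moreover have "sqrt (1 + m\<^sup>2) \<le> 6 * lam * sqrt (1 + m\<^sup>2)"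
    using assms by (simp add: mult_le_cancel_right1) (smt (verit) zero_le_power2)
  ultimately show "0 < m + 6 * lam * sqrt (1 + m\<^sup>2)" "m - 6 * lam * sqrt (1 + m\<^sup>2) < 0" by linarith+
qed

lemma state:
  fixes lam x :: real
  assumes lam: "1/6 < lam" and x: "x \<in> {0..1}"
  shows "(T ^^ n) x \<in> {0..1} \<and> x = an n x + eps n x * ell n x * (T ^^ n) x
    \<and> (lo n x, hi n x) \<in> gen n
    \<and> sgn (sl lam n (lo n x) (hi n x)) = sgn (real (beta2 1 2 x n)) * eps n x"
proof (induct n)
  case 0
  have "eps 0 x = 1" "ell 0 x = 1" "an 0 x = 0" "beta2 1 2 x 0 = 0"
    by (simp_all add: eps_def ell_def an_def beta2_def beta_def)
  then show ?case using x by (simp add: lo_def hi_def sl_def)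
next
  case (Suc n)
  define Y where "Y = (T ^^ n) x"
  define m where "m = sl lam n (lo n x) (hi n x)"
  define sg where "sg = 6 * lam * sqrt (1 + m\<^sup>2)"
  have Y: "Y \<in> {0..1}" and xe: "x = an n x + eps n x * ell n x * Y" and G: "(lo n x, hi n x) \<in> gen n"
    and S: "sgn m = sgn (real (beta2 1 2 x n)) * eps n x"
    using Suc unfolding Y_def m_def by auto
  have TY: "(T ^^ Suc n) x = T Y" unfolding Y_def by simp
  have TYr: "T Y \<in> {0..1}" using T_range[OF Y] .
  have L: "0 < ell n x" by (rule ell_pos)
  note cs = child_slopes[OF G, of lam, folded m_def, folded sg_def]
  note gs = gen_SucI[OF G]
  have sp: "0 < m + sg" "m - sg < 0" unfolding sg_def using sl_sign[OF lam] by auto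
  have pos1: "sgn (real (k + 1)) = (1::real)" for k :: nat by simp
  consider (c0) "Y < 1/3" | (c1) "1/3 \<le> Y" "Y < 1/2" | (c2) "1/2 \<le> Y" "Y < 2/3" | (c3) "2/3 \<le> Y" by linarith
  then show ?case
  proof cases
    case c0
    have u: "u n x = 0" using c0 unfolding u_def U_def Y_def[symmetric] by auto
    have ut: "ut n x = 0" using c0 unfolding ut_def Ut_def Y_def[symmetric] by auto
    have T: "T Y = 3 * Y" using c0 unfolding T_def by auto
    have r: "an (Suc n) x = an n x + 0 * eps n x * ell n x" "ell (Suc n) x = ell n x / 3"
      "eps (Suc n) x = eps n x"
      "beta2 1 2 x (Suc n) = beta2 1 2 x n"
      using an_Suc ell_Suc eps_Suc b12_Suc u ut by auto
    consider (p) "eps n x = 1" | (q) "eps n x = -1" using eps_pm[of n x] by blast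
    then show ?thesis
    proof cases
      case p
      have P: "(lo (Suc n) x, hi (Suc n) x) = (lo n x, lo n x + (hi n x - lo n x) / 3)"
        using p r unfolding lo_def hi_def by (auto simp: field_simps)
      have g: "(lo (Suc n) x, hi (Suc n) x) \<in> gen (Suc n)" unfolding P by (rule gs(1))
      have sl: "sl lam (Suc n) (lo (Suc n) x) (hi (Suc n) x) = m"
        using cs(1) P by simp
      have xe': "x = an (Suc n) x + eps (Suc n) x * ell (Suc n) x * (T ^^ Suc n) x"
        unfolding TY T r using xe p L by (simp add: field_simps)
      have sg': "sgn (sl lam (Suc n) (lo (Suc n) x) (hi (Suc n) x)) = sgn (real (beta2 1 2 x (Suc n))) * eps (Suc n) x"
        unfolding sl r using S by simp
      show ?thesis using TYr xe' g sg' unfolding TY by blast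
    next
      case q
      have P: "(lo (Suc n) x, hi (Suc n) x) = (lo n x + 2 * (hi n x - lo n x) / 3, hi n x)"
        using q r unfolding lo_def hi_def by (auto simp: field_simps)
      have g: "(lo (Suc n) x, hi (Suc n) x) \<in> gen (Suc n)" unfolding P by (rule gs(4))
      have sl: "sl lam (Suc n) (lo (Suc n) x) (hi (Suc n) x) = m"
        using cs(4) P by simp
      have xe': "x = an (Suc n) x + eps (Suc n) x * ell (Suc n) x * (T ^^ Suc n) x"
        unfolding TY T r using xe q L by (simp add: field_simps)
      have sg': "sgn (sl lam (Suc n) (lo (Suc n) x) (hi (Suc n) x)) = sgn (real (beta2 1 2 x (Suc n))) * eps (Suc n) x"
        unfolding sl r using S by simp
      show ?thesis using TYr xe' g sg' unfolding TY by blast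
    qed
  next
    case c1
    have u: "u n x = 1" using c1 unfolding u_def U_def Y_def[symmetric] by auto
    have ut: "ut n x = 1/3" using c1 unfolding ut_def Ut_def Y_def[symmetric] by auto
    have T: "T Y = 6 * Y - 2" using c1 unfolding T_def by auto
    have r: "an (Suc n) x = an n x + 1/3 * eps n x * ell n x" "ell (Suc n) x = ell n x / 6"
      "eps (Suc n) x = eps n x"
      "beta2 1 2 x (Suc n) = beta2 1 2 x n + 1"
      using an_Suc ell_Suc eps_Suc b12_Suc u ut by auto
    consider (p) "eps n x = 1" | (q) "eps n x = -1" using eps_pm[of n x] by blast
    then show ?thesis
    proof cases
      case p
      have P: "(lo (Suc n) x, hi (Suc n) x) = (lo n x + (hi n x - lo n x) / 3, lo n x + (hi n x - lo n x) / 2)"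
        using p r unfolding lo_def hi_def by (auto simp: field_simps)
      have g: "(lo (Suc n) x, hi (Suc n) x) \<in> gen (Suc n)" unfolding P by (rule gs(2))
      have sl: "sl lam (Suc n) (lo (Suc n) x) (hi (Suc n) x) = m + sg"
        using cs(2) P by simp
      have xe': "x = an (Suc n) x + eps (Suc n) x * ell (Suc n) x * (T ^^ Suc n) x"
        unfolding TY T r using xe p L by (simp add: field_simps)
      have sg': "sgn (sl lam (Suc n) (lo (Suc n) x) (hi (Suc n) x)) = sgn (real (beta2 1 2 x (Suc n))) * eps (Suc n) x"
        using sp(1) sl r p by (simp add: sgn_if)
      show ?thesis using TYr xe' g sg' unfolding TY by blast
    next
      case q
      have P: "(lo (Suc n) x, hi (Suc n) x) = (lo n x + (hi n x - lo n x) / 2, lo n x + 2 * (hi n x - lo n x) / 3)"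
        using q r unfolding lo_def hi_def by (auto simp: field_simps)
      have g: "(lo (Suc n) x, hi (Suc n) x) \<in> gen (Suc n)" unfolding P by (rule gs(3))
      have sl: "sl lam (Suc n) (lo (Suc n) x) (hi (Suc n) x) = m - sg"
        using cs(3) P by simp
      have xe': "x = an (Suc n) x + eps (Suc n) x * ell (Suc n) x * (T ^^ Suc n) x"
        unfolding TY T r using xe q L by (simp add: field_simps)
      have sg': "sgn (sl lam (Suc n) (lo (Suc n) x) (hi (Suc n) x)) = sgn (real (beta2 1 2 x (Suc n))) * eps (Suc n) x"
        using sp(2) sl r q by (simp add: sgn_if)
      show ?thesis using TYr xe' g sg' unfolding TY by blast
    qed
  next
    case c2
    have u: "u n x = 2" using c2 unfolding u_def U_def Y_def[symmetric] by auto
    have ut: "ut n x = 2/3" using c2 unfolding ut_def Ut_def Y_def[symmetric] by auto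
    have T: "T Y = 4 - 6 * Y" using c2 unfolding T_def by auto
    have r: "an (Suc n) x = an n x + 2/3 * eps n x * ell n x" "ell (Suc n) x = ell n x / 6"
      "eps (Suc n) x = - eps n x"
      "beta2 1 2 x (Suc n) = beta2 1 2 x n + 1"
      using an_Suc ell_Suc eps_Suc b12_Suc u ut by auto
    consider (p) "eps n x = 1" | (q) "eps n x = -1" using eps_pm[of n x] by blast
    then show ?thesis
    proof cases
      case p
      have P: "(lo (Suc n) x, hi (Suc n) x) = (lo n x + (hi n x - lo n x) / 2, lo n x + 2 * (hi n x - lo n x) / 3)"
        using p r unfolding lo_def hi_def by (auto simp: field_simps)
      have g: "(lo (Suc n) x, hi (Suc n) x) \<in> gen (Suc n)" unfolding P by (rule gs(3))
      have sl: "sl lam (Suc n) (lo (Suc n) x) (hi (Suc n) x) = m - sg"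
        using cs(3) P by simp
      have xe': "x = an (Suc n) x + eps (Suc n) x * ell (Suc n) x * (T ^^ Suc n) x"
        unfolding TY T r using xe p L by (simp add: field_simps)
      have sg': "sgn (sl lam (Suc n) (lo (Suc n) x) (hi (Suc n) x)) = sgn (real (beta2 1 2 x (Suc n))) * eps (Suc n) x"
        using sp(2) sl r p by (simp add: sgn_if)
      show ?thesis using TYr xe' g sg' unfolding TY by blast
    next
      case q
      have P: "(lo (Suc n) x, hi (Suc n) x) = (lo n x + (hi n x - lo n x) / 3, lo n x + (hi n x - lo n x) / 2)"
        using q r unfolding lo_def hi_def by (auto simp: field_simps)
      have g: "(lo (Suc n) x, hi (Suc n) x) \<in> gen (Suc n)" unfolding P by (rule gs(2))
      have sl: "sl lam (Suc n) (lo (Suc n) x) (hi (Suc n) x) = m + sg"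
        using cs(2) P by simp
      have xe': "x = an (Suc n) x + eps (Suc n) x * ell (Suc n) x * (T ^^ Suc n) x"
        unfolding TY T r using xe q L by (simp add: field_simps)
      have sg': "sgn (sl lam (Suc n) (lo (Suc n) x) (hi (Suc n) x)) = sgn (real (beta2 1 2 x (Suc n))) * eps (Suc n) x"
        using sp(1) sl r q by (simp add: sgn_if)
      show ?thesis using TYr xe' g sg' unfolding TY by blast
    qed
  next
    case c3
    have u: "u n x = 3" using c3 unfolding u_def U_def Y_def[symmetric] by auto
    have ut: "ut n x = 2/3" using c3 unfolding ut_def Ut_def Y_def[symmetric] by auto
    have T: "T Y = 3 * Y - 2" using c3 unfolding T_def by auto
    have r: "an (Suc n) x = an n x + 2/3 * eps n x * ell n x" "ell (Suc n) x = ell n x / 3"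
      "eps (Suc n) x = eps n x"
      "beta2 1 2 x (Suc n) = beta2 1 2 x n"
      using an_Suc ell_Suc eps_Suc b12_Suc u ut by auto
    consider (p) "eps n x = 1" | (q) "eps n x = -1" using eps_pm[of n x] by blast
    then show ?thesis
    proof cases
      case p
      have P: "(lo (Suc n) x, hi (Suc n) x) = (lo n x + 2 * (hi n x - lo n x) / 3, hi n x)"
        using p r unfolding lo_def hi_def by (auto simp: field_simps)
      have g: "(lo (Suc n) x, hi (Suc n) x) \<in> gen (Suc n)" unfolding P by (rule gs(4))
      have sl: "sl lam (Suc n) (lo (Suc n) x) (hi (Suc n) x) = m"
        using cs(4) P by simp
      have xe': "x = an (Suc n) x + eps (Suc n) x * ell (Suc n) x * (T ^^ Suc n) x"
        unfolding TY T r using xe p L by (simp add: field_simps)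
      have sg': "sgn (sl lam (Suc n) (lo (Suc n) x) (hi (Suc n) x)) = sgn (real (beta2 1 2 x (Suc n))) * eps (Suc n) x"
        unfolding sl r using S by simp
      show ?thesis using TYr xe' g sg' unfolding TY by blast
    next
      case q
      have P: "(lo (Suc n) x, hi (Suc n) x) = (lo n x, lo n x + (hi n x - lo n x) / 3)"
        using q r unfolding lo_def hi_def by (auto simp: field_simps)
      have g: "(lo (Suc n) x, hi (Suc n) x) \<in> gen (Suc n)" unfolding P by (rule gs(1))
      have sl: "sl lam (Suc n) (lo (Suc n) x) (hi (Suc n) x) = m"
        using cs(1) P by simp
      have xe': "x = an (Suc n) x + eps (Suc n) x * ell (Suc n) x * (T ^^ Suc n) x"
        unfolding TY T r using xe q L by (simp add: field_simps)
      have sg': "sgn (sl lam (Suc n) (lo (Suc n) x) (hi (Suc n) x)) = sgn (real (beta2 1 2 x (Suc n))) * eps (Suc n) x"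
        unfolding sl r using S by simp
      show ?thesis using TYr xe' g sg' unfolding TY by blast
    qed
  qed
qed


lemma Tpow_fix: "T p = p \<Longrightarrow> (T ^^ j) p = p"
  by (induct j) auto

lemma Tpow_shift: "n \<le> k \<Longrightarrow> (T ^^ k) x = (T ^^ (k - n)) ((T ^^ n) x)"
proof -
  assume "n \<le> k"
  then have "k = (k - n) + n" by simp
  then have "(T ^^ k) x = (T ^^ ((k - n) + n)) x" by simp
  also have "\<dots> = (T ^^ (k - n)) ((T ^^ n) x)" by (simp add: funpow_add)
  finally show ?thesis .
qed

lemma notE_Y: assumes "x \<notin> E" shows "(T ^^ n) x \<noteq> 0" "(T ^^ n) x \<noteq> 1"
proof -
  have T0: "T 0 = 0" and T1: "T 1 = 1" by (simp_all add: T_def)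
  show "(T ^^ n) x \<noteq> 0"
  proof
    assume h: "(T ^^ n) x = 0"
    have "\<forall>k\<ge>n. u k x = 0"
      using Tpow_shift[of n _ x] h Tpow_fix[OF T0] by (auto simp: u_def U_def)
    then show False using assms unfolding E_def by blast
  qed
  show "(T ^^ n) x \<noteq> 1"
  proof
    assume h: "(T ^^ n) x = 1"
    have "\<forall>k\<ge>n. u k x = 3"
      using Tpow_shift[of n _ x] h Tpow_fix[OF T1] by (auto simp: u_def U_def)
    then show False using assms unfolding E_def by blast
  qed
qed

theorem lemma3p2:
  fixes lam x :: real and n :: nat
  assumes "1/6 < lam" and "lam < 5/6"
    and "x \<in> {0..1}" and "x \<notin> E"
  shows "x \<in> In n x \<and> In n x \<subseteq> {0..1} \<and> affine_on (Flam lam n) (In n x)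
    \<and> (\<forall>c d. x \<in> {c<..<d} \<and> {c<..<d} \<subseteq> {0..1} \<and> affine_on (Flam lam n) {c<..<d}
            \<longrightarrow> {c<..<d} \<subseteq> In n x)
    \<and> Flam lam n differentiable (at x)
    \<and> deriv (Flam lam n) x = (Flam lam n x - Flam lam n (an n x)) / (x - an n x)
    \<and> sgn (deriv (Flam lam n) x) = sgn (real (beta2 1 2 x n)) * eps n x"
proof -
  note st = state[OF assms(1) assms(3), of n]
  define Y where "Y = (T ^^ n) x"
  define l where "l = lo n x"
  define h where "h = hi n x"
  define m where "m = sl lam n l h"
  have Y: "Y \<in> {0..1}" "Y \<noteq> 0" "Y \<noteq> 1" using st notE_Y[OF assms(4)] unfolding Y_def by auto
  have xe: "x = an n x + eps n x * ell n x * Y" using st unfolding Y_def by auto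
  have G: "(l, h) \<in> gen n" using st unfolding l_def h_def by auto
  have S: "sgn m = sgn (real (beta2 1 2 x n)) * eps n x" using st unfolding m_def l_def h_def by auto
  have gp: "0 \<le> l" "l < h" "h \<le> 1" using gen_props[OF G] by auto
  have aff: "\<forall>y\<in>{l..h}. Flam lam n y = Flam lam n l + m * (y - l)"
    using gen_affine[OF G] unfolding m_def .
  have Ieq: "In n x = {l<..<h}" unfolding In_eq l_def h_def ..
  have L: "0 < ell n x" by (rule ell_pos)
  have lh: "l = (if eps n x = 1 then an n x else an n x - ell n x)" "h = (if eps n x = 1 then an n x + ell n x else an n x)"
    unfolding l_def h_def lo_def hi_def by auto
  have Y01: "0 < Y" "Y < 1" using Y by auto
  have LY: "0 < ell n x * Y" "ell n x * Y < ell n x" using L Y01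
    using mult_strict_left_mono[of Y 1 "ell n x"] by simp_all
  have xin: "l < x \<and> x < h"
  proof (cases "eps n x = 1")
    case True
    then show ?thesis using xe lh LY by simp
  next
    case False
    then have "eps n x = -1" using eps_pm[of n x] by auto
    then show ?thesis using xe lh LY by simp
  qed
  have anlh: "an n x = l \<or> an n x = h" using lh by auto
  have lin: "Flam lam n y = (Flam lam n l - m * l) + m * y" if "y \<in> {l<..<h}" for y
    using bspec[OF aff, of y] that by (auto simp: algebra_simps)
  have P1: "x \<in> In n x" using xin Ieq by auto
  have P2: "In n x \<subseteq> {0..1}" using gp Ieq by auto
  have P3: "affine_on (Flam lam n) (In n x)" unfolding affine_on_def Ieq
    using lin by (intro exI[where x=m] exI[where x="Flam lam n l - m * l"]) (auto simp: algebra_simps)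
  have lam0: "0 < lam" using assms(1) by simp
  have K: "(0 < l \<longrightarrow> kink lam n l) \<and> (h < 1 \<longrightarrow> kink lam n h)" using gen_kink[OF lam0 G] .
  have P4: "\<forall>c d. x \<in> {c<..<d} \<and> {c<..<d} \<subseteq> {0..1} \<and> affine_on (Flam lam n) {c<..<d}
            \<longrightarrow> {c<..<d} \<subseteq> In n x"
  proof (intro allI impI)
    fix c d assume a: "x \<in> {c<..<d} \<and> {c<..<d} \<subseteq> {0..1} \<and> affine_on (Flam lam n) {c<..<d}"
    then obtain C D where CD: "\<forall>y\<in>{c<..<d}. Flam lam n y = C * y + D" unfolding affine_on_def by blast
    have cx: "c < x" "x < d" using a by auto
    have sub: "{c<..<d} \<subseteq> {0..1}" using a by auto
    have "l \<le> c"
    proof (rule ccontr)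
      assume "\<not> l \<le> c"
      then have cl: "c < l" by simp
      have "0 < l"
      proof (rule ccontr)
        assume "\<not> 0 < l"
        then have "c < 0" using cl gp by simp
        then have "c / 2 \<in> {c<..<d}" using cx gp xin by auto
        then show False using sub \<open>c < 0\<close> by fastforce
      qed
      then have "kink lam n l" using K by simp
      from kink_contra[OF this cl _ CD] show False using xin cx by simp
    qed
    moreover have "d \<le> h"
    proof (rule ccontr)
      assume "\<not> d \<le> h"
      then have hd: "h < d" by simp
      have "h < 1"
      proof (rule ccontr)
        assume "\<not> h < 1"
        then have "1 < d" using hd gp by simp
        then have "(1 + d) / 2 \<in> {c<..<d}" using cx gp xin by auto
        then show False using sub \<open>1 < d\<close> by fastforce
      qed
      then have "kink lam n h" using K by simp
      from kink_contra[OF this _ hd CD] show False using xin cx by simp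
    qed
    ultimately show "{c<..<d} \<subseteq> In n x" unfolding Ieq by auto
  qed
  have D: "(Flam lam n has_field_derivative m) (at x)"
  proof (rule has_field_derivative_transform_within_open[where f="\<lambda>y. (Flam lam n l - m * l) + m * y" and S="{l<..<h}"])
    show "((\<lambda>y. Flam lam n l - m * l + m * y) has_field_derivative m) (at x)"
      by (auto intro!: derivative_eq_intros)
    show "open {l<..<h}" by simp
    show "x \<in> {l<..<h}" using xin by simp
    show "\<And>y. y \<in> {l<..<h} \<Longrightarrow> Flam lam n l - m * l + m * y = Flam lam n y" using lin by simp
  qed
  have P5: "Flam lam n differentiable (at x)" using D real_differentiable_def by blast
  have dv: "deriv (Flam lam n) x = m" using DERIV_imp_deriv[OF D] .
  have fa: "Flam lam n (an n x) = Flam lam n l + m * (an n x - l)"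
    using bspec[OF aff, of "an n x"] anlh gp by auto
  have fx: "Flam lam n x = Flam lam n l + m * (x - l)"
    using bspec[OF aff, of x] xin by auto
  have xa: "x - an n x \<noteq> 0" using anlh xin by auto
  have P6: "deriv (Flam lam n) x = (Flam lam n x - Flam lam n (an n x)) / (x - an n x)"
  proof -
    have "Flam lam n x - Flam lam n (an n x) = m * (x - an n x)" unfolding fa fx by (simp add: algebra_simps)
    then show ?thesis unfolding dv using xa by simp
  qed
  have P7: "sgn (deriv (Flam lam n) x) = sgn (real (beta2 1 2 x n)) * eps n x" unfolding dv by (rule S)
  show ?thesis using P1 P2 P3 P4 P5 P6 P7 by blast
qed

end
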